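(* Let $T$ be a non-abelian finite simple group. The fixity of $\mathrm{Hol}(T)$ in its action on $T$ (the maximum number of points of $T$ fixed by a non-identity element of $\mathrm{Hol}(T)$) equals $h(T)=\max\{|C_T(x)|:1\neq x\in\mathrm{Aut}(T)\}$.
   Context: $\mathrm{Hol}(T)=T{:}\mathrm{Aut}(T)$ acts on $T$ by $t^{g\alpha}=(g^{-1}t)^\alpha$ for $g\in T$, $\alpha\in\mathrm{Aut}(T)$. *)

theory Defs
  imports "HOL-Algebra.Algebra"
begin

text \<open>Elements of Hol(T) = T:Aut(T), represented as pairs (g, alpha) with g in T and
alpha in Aut(T) (automorphisms as extensional bijections of the carrier, library notion auto).\<close>
definition hol_elems :: "('a, 'b) monoid_scheme \<Rightarrow> ('a \<times> ('a \<Rightarrow> 'a)) set" where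
  "hol_elems T = carrier T \<times> auto T"

definition hol_act :: "('a, 'b) monoid_scheme \<Rightarrow> 'a \<times> ('a \<Rightarrow> 'a) \<Rightarrow> 'a \<Rightarrow> 'a" where
  "hol_act T p t = snd p (inv\<^bsub>T\<^esub> (fst p) \<otimes>\<^bsub>T\<^esub> t)"

definition hol_one :: "('a, 'b) monoid_scheme \<Rightarrow> 'a \<times> ('a \<Rightarrow> 'a)" where
  "hol_one T = (\<one>\<^bsub>T\<^esub>, (\<lambda>x \<in> carrier T. x))"

definition hol_fix :: "('a, 'b) monoid_scheme \<Rightarrow> 'a \<times> ('a \<Rightarrow> 'a) \<Rightarrow> 'a set" where
  "hol_fix T p = {t \<in> carrier T. hol_act T p t = t}"

definition hol_fixity :: "('a, 'b) monoid_scheme \<Rightarrow> nat" where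
  "hol_fixity T = Max {card (hol_fix T p) | p. p \<in> hol_elems T \<and> p \<noteq> hol_one T}"

definition aut_centralizer :: "('a, 'b) monoid_scheme \<Rightarrow> ('a \<Rightarrow> 'a) \<Rightarrow> 'a set" where
  "aut_centralizer T x = {t \<in> carrier T. x t = t}"

definition h_param :: "('a, 'b) monoid_scheme \<Rightarrow> nat" where
  "h_param T = Max {card (aut_centralizer T x) | x. x \<in> auto T \<and> x \<noteq> (\<lambda>y \<in> carrier T. y)}"

end

theory Submission
  imports Defs
begin

lemma conj_auto:
  fixes T (structure)
  assumes G: "group T" and a: "a \<in> carrier T"
  shows "(\<lambda>x \<in> carrier T. a \<otimes>\<^bsub>T\<^esub> x \<otimes>\<^bsub>T\<^esub> inv\<^bsub>T\<^esub> a) \<in> auto T"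
proof -
  interpret group T by (rule G)
  let ?c = "\<lambda>x \<in> carrier T. a \<otimes> x \<otimes> inv a"
  have hom: "?c \<in> hom T T"
  proof -
    have cc: "\<And>z. z \<in> carrier T \<Longrightarrow> inv a \<otimes> (a \<otimes> z) = z"
      using a by (simp add: m_assoc[symmetric])
    show ?thesis by (rule homI) (auto simp: a m_assoc cc)
  qed
  have inj: "inj_on ?c (carrier T)"
    by (auto simp: inj_on_def a)
  have "?c ` carrier T = carrier T"
  proof
    show "?c ` carrier T \<subseteq> carrier T" using a by auto
    show "carrier T \<subseteq> ?c ` carrier T"
    proof
      fix y assume y: "y \<in> carrier T"
      have "inv a \<otimes> y \<otimes> a \<in> carrier T" using a y by auto
      moreover have "?c (inv a \<otimes> y \<otimes> a) = y" proof -
        have "?c (inv a \<otimes> y \<otimes> a) = a \<otimes> (inv a \<otimes> y \<otimes> a) \<otimes> inv a" using a y by simp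
        also have "\<dots> = y"
        proof -
          have cc2: "a \<otimes> (inv a \<otimes> y) = y" using a y by (simp add: m_assoc[symmetric])
          show ?thesis using a y cc2 by (simp add: m_assoc)
        qed
        finally show ?thesis .
      qed
      ultimately show "y \<in> ?c ` carrier T" by (rule image_eqI[OF sym, rotated])
    qed
  qed
  then show ?thesis using hom inj
    by (simp add: auto_def Bij_def bij_betw_def)
qed

theorem lemma3p3:
  fixes T (structure)
  assumes "simple_group T" and "finite (carrier T)" and "\<not> comm_group T"
  shows "hol_fixity T = h_param T"
proof -
  have G: "group T" using assms(1) simple_group_def by blast
  interpret group T by (rule G)
  define S1 where "S1 = {card (hol_fix T p) | p. p \<in> hol_elems T \<and> p \<noteq> hol_one T}"
  define S2 where "S2 = {card (aut_centralizer T x) | x. x \<in> auto T \<and> x \<noteq> (\<lambda>y \<in> carrier T. y)}"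
  have fin1: "finite S1"
  proof (rule finite_subset)
    show "S1 \<subseteq> {0..card (carrier T)}"
      unfolding S1_def hol_fix_def
      by (auto intro!: card_mono assms(2))
  qed simp
  have S21: "S2 \<subseteq> S1"
  proof
    fix n assume "n \<in> S2"
    then obtain x where x: "x \<in> auto T" "x \<noteq> (\<lambda>y \<in> carrier T. y)"
      and n: "n = card (aut_centralizer T x)" unfolding S2_def by blast
    have "(\<one>, x) \<in> hol_elems T" "(\<one>, x) \<noteq> hol_one T"
      using x by (auto simp: hol_elems_def hol_one_def)
    moreover have "hol_fix T (\<one>, x) = aut_centralizer T x"
      by (auto simp: hol_fix_def hol_act_def aut_centralizer_def)
    ultimately have "card (hol_fix T (\<one>, x)) \<in> S1" unfolding S1_def by blast
    then show "n \<in> S1" using n \<open>hol_fix T (\<one>, x) = aut_centralizer T x\<close> by simp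
  qed
  have S12: "S1 \<subseteq> insert 0 S2"
  proof
    fix n assume "n \<in> S1"
    then obtain pp where pp: "pp \<in> hol_elems T" "pp \<noteq> hol_one T"
      and npp: "n = card (hol_fix T pp)" unfolding S1_def by blast
    obtain g \<alpha> where gpp: "pp = (g, \<alpha>)" by (cases pp)
    have p: "(g, \<alpha>) \<in> hol_elems T" "(g, \<alpha>) \<noteq> hol_one T"
      and n: "n = card (hol_fix T (g, \<alpha>))" using pp npp gpp by auto
    have g: "g \<in> carrier T" and al: "\<alpha> \<in> auto T" using p by (auto simp: hol_elems_def)
    have ahom: "\<alpha> \<in> hom T T" and abij: "\<alpha> \<in> Bij (carrier T)" using al by (auto simp: auto_def)
    show "n \<in> insert 0 S2"
    proof (cases "hol_fix T (g, \<alpha>) = {}")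
      case True then show ?thesis using n by simp
    next
      case False
      then obtain t0 where t0: "t0 \<in> carrier T" "\<alpha> (inv g \<otimes> t0) = t0"
        by (auto simp: hol_fix_def hol_act_def)
      have aS: "\<And>s. s \<in> carrier T \<Longrightarrow> \<alpha> s \<in> carrier T"
        using ahom by (auto simp: hom_def)
      have key: "\<And>s. s \<in> carrier T \<Longrightarrow> \<alpha> (inv g \<otimes> (t0 \<otimes> s)) = t0 \<otimes> \<alpha> s"
      proof -
        fix s assume s: "s \<in> carrier T"
        have "\<alpha> (inv g \<otimes> (t0 \<otimes> s)) = \<alpha> ((inv g \<otimes> t0) \<otimes> s)"
          using g t0 s by (simp add: m_assoc)
        also have "\<dots> = \<alpha> (inv g \<otimes> t0) \<otimes> \<alpha> s"
          using ahom g t0 s by (simp add: hom_mult)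
        finally show "\<alpha> (inv g \<otimes> (t0 \<otimes> s)) = t0 \<otimes> \<alpha> s" using t0 by simp
      qed
      have eq: "hol_fix T (g, \<alpha>) = (\<lambda>s. t0 \<otimes> s) ` aut_centralizer T \<alpha>"
      proof
        show "hol_fix T (g, \<alpha>) \<subseteq> (\<lambda>s. t0 \<otimes> s) ` aut_centralizer T \<alpha>"
        proof
          fix t assume t: "t \<in> hol_fix T (g, \<alpha>)"
          then have tc: "t \<in> carrier T" and ft: "\<alpha> (inv g \<otimes> t) = t"
            by (auto simp: hol_fix_def hol_act_def)
          define s where "s = inv t0 \<otimes> t"
          have sc: "s \<in> carrier T" using t0 tc s_def by auto
          have ts: "t = t0 \<otimes> s" using t0 tc by (simp add: s_def m_assoc[symmetric])
          have "t0 \<otimes> \<alpha> s = t0 \<otimes> s" using key[OF sc] ft ts by simp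
          then have "\<alpha> s = s" using t0 sc aS[OF sc] by simp
          then show "t \<in> (\<lambda>s. t0 \<otimes> s) ` aut_centralizer T \<alpha>"
            using ts sc by (auto simp: aut_centralizer_def)
        qed
        show "(\<lambda>s. t0 \<otimes> s) ` aut_centralizer T \<alpha> \<subseteq> hol_fix T (g, \<alpha>)"
          using key t0 by (auto simp: aut_centralizer_def hol_fix_def hol_act_def)
      qed
      have "inj_on (\<lambda>s. t0 \<otimes> s) (aut_centralizer T \<alpha>)"
        using t0 by (auto simp: inj_on_def aut_centralizer_def)
      then have cn: "n = card (aut_centralizer T \<alpha>)" using n eq card_image by metis
      have "\<alpha> \<noteq> (\<lambda>y \<in> carrier T. y)"
      proof
        assume aid: "\<alpha> = (\<lambda>y \<in> carrier T. y)"
        then have "inv g \<otimes> t0 = t0" using t0 g by simp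
        then have "inv g = \<one>" using g t0 by simp
        then have "g = \<one>" using g by simp
        then show False using p aid by (simp add: hol_one_def)
      qed
      then show ?thesis using cn al unfolding S2_def by blast
    qed
  qed
  obtain a b where ab: "a \<in> carrier T" "b \<in> carrier T" "a \<otimes> b \<noteq> b \<otimes> a"
    using assms(3) group_comm_groupI by blast
  let ?c = "\<lambda>x \<in> carrier T. a \<otimes> x \<otimes> inv a"
  have "?c \<noteq> (\<lambda>y \<in> carrier T. y)"
  proof
    assume "?c = (\<lambda>y \<in> carrier T. y)"
    then have "?c b = b" using ab by simp
    then have "a \<otimes> b \<otimes> inv a = b" using ab by simp
    then have "a \<otimes> b \<otimes> inv a \<otimes> a = b \<otimes> a" by simp
    then show False using ab by (simp add: m_assoc)
  qed
  then have ne: "S2 \<noteq> {}" using conj_auto[OF G ab(1)] unfolding S2_def by blast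
  have fin2: "finite S2" using S21 fin1 finite_subset by blast
  have "Max S1 = Max S2"
  proof (rule antisym)
    show "Max S2 \<le> Max S1" using S21 ne fin1 by (simp add: Max_mono)
    show "Max S1 \<le> Max S2"
    proof -
      have "S1 \<noteq> {}" using S21 ne by blast
      then have "Max S1 \<in> S1" using fin1 by simp
      then have "Max S1 \<in> insert 0 S2" using S12 by blast
      then show ?thesis using fin2 by auto
    qed
  qed
  then show ?thesis unfolding hol_fixity_def h_param_def S1_def S2_def by simp
qed

end
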